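(* Let $(G,\prec)$ be a POP-graph with input edges $i_1\prec i_2\prec\cdots\prec i_m$ and output edges $o_1\prec\cdots\prec o_n$. (1) For $e\in E(G)\setminus I(G)$ and $1\le k\le m$: $e\in P_k$ if and only if $i^+(e)=i_k$. (2) For $e\in E(G)\setminus O(G)$ and $1\le k\le n$: $e\in Q_k$ if and only if $o^-(e)=o_k$.
   Context: A progressive graph is a finite directed acyclic graph (parallel edges allowed) in which every source and every sink has degree one; degree-one vertices are boundary vertices. $I(G)$ is the set of input edges (initial vertex a boundary vertex), $O(G)$ the set of output edges (terminal vertex a boundary vertex). For edges write $e\to e'$ if $e\neq e'$ and there is a directed path whose first edge is $e$ and last edge is $e'$. A planar order on $G$ is a linear order $\prec$ on $E(G)$ such that (P1) $e_1\to e_2$ implies $e_1\prec e_2$; (P2) if $e_1\prec e_2\prec e_3$ and $e_1\to e_3$ then $e_1\to e_2$ or $e_2\to e_3$. A POP-graph is a progressive graph with a planar order. $i^+(e)$ is the $\prec$-maximum of $\{i\in I(G): i\to e\}$ and $o^-(e)$ the $\prec$-minimum of $\{o\in O(G): e\to o\}$. Intervals: $P_k=\{e: i_k\prec e\prec i_{k+1}\}$ for $1\le k\le m-1$, $P_m=\{e: i_m\prec e\}$; $Q_1=\{e: e\prec o_1\}$, $Q_k=\{e: o_{k-1}\prec e\prec o_k\}$ for $2\le k\le n$. *)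

theory Defs
  imports Main
begin

text \<open>A finite directed graph with parallel edges is given by a vertex set V, an edge set E
  and the initial/terminal vertex maps src, tgt.\<close>

definition indeg :: "'e set \<Rightarrow> ('e \<Rightarrow> 'v) \<Rightarrow> 'v \<Rightarrow> nat" where
  "indeg E tgt v = card {e \<in> E. tgt e = v}"

definition outdeg :: "'e set \<Rightarrow> ('e \<Rightarrow> 'v) \<Rightarrow> 'v \<Rightarrow> nat" where
  "outdeg E src v = card {e \<in> E. src e = v}"

definition degree :: "'e set \<Rightarrow> ('e \<Rightarrow> 'v) \<Rightarrow> ('e \<Rightarrow> 'v) \<Rightarrow> 'v \<Rightarrow> nat" where
  "degree E src tgt v = indeg E tgt v + outdeg E src v"

definition edge_succ :: "'e set \<Rightarrow> ('e \<Rightarrow> 'v) \<Rightarrow> ('e \<Rightarrow> 'v) \<Rightarrow> ('e \<times> 'e) set" where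
  "edge_succ E src tgt = {(a, b). a \<in> E \<and> b \<in> E \<and> tgt a = src b}"

definition reach :: "'e set \<Rightarrow> ('e \<Rightarrow> 'v) \<Rightarrow> ('e \<Rightarrow> 'v) \<Rightarrow> 'e \<Rightarrow> 'e \<Rightarrow> bool" where
  "reach E src tgt e e' \<longleftrightarrow> e \<noteq> e' \<and> (e, e') \<in> (edge_succ E src tgt)\<^sup>+"

definition progressive_graph :: "'v set \<Rightarrow> 'e set \<Rightarrow> ('e \<Rightarrow> 'v) \<Rightarrow> ('e \<Rightarrow> 'v) \<Rightarrow> bool" where
  "progressive_graph V E src tgt \<longleftrightarrow>
     finite V \<and> finite E \<and> src ` E \<subseteq> V \<and> tgt ` E \<subseteq> V \<and>
     \<comment> \<open>acyclic: no closed directed path\<close>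
     (\<forall>e \<in> E. (e, e) \<notin> (edge_succ E src tgt)\<^sup>+) \<and>
     \<comment> \<open>every source and every sink has degree one\<close>
     (\<forall>v \<in> V. (indeg E tgt v = 0 \<or> outdeg E src v = 0) \<longrightarrow> degree E src tgt v = 1)"

definition input_edges :: "'e set \<Rightarrow> ('e \<Rightarrow> 'v) \<Rightarrow> ('e \<Rightarrow> 'v) \<Rightarrow> 'e set" where
  "input_edges E src tgt = {e \<in> E. degree E src tgt (src e) = 1}"

definition output_edges :: "'e set \<Rightarrow> ('e \<Rightarrow> 'v) \<Rightarrow> ('e \<Rightarrow> 'v) \<Rightarrow> 'e set" where
  "output_edges E src tgt = {e \<in> E. degree E src tgt (tgt e) = 1}"

definition planar_order :: "'e set \<Rightarrow> ('e \<Rightarrow> 'v) \<Rightarrow> ('e \<Rightarrow> 'v) \<Rightarrow> ('e \<Rightarrow> 'e \<Rightarrow> bool) \<Rightarrow> bool" where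
  "planar_order E src tgt prec \<longleftrightarrow>
     (\<forall>a. \<forall>b. prec a b \<longrightarrow> a \<in> E \<and> b \<in> E) \<and>
     (\<forall>a \<in> E. \<not> prec a a) \<and>
     (\<forall>a \<in> E. \<forall>b \<in> E. \<forall>c \<in> E. prec a b \<longrightarrow> prec b c \<longrightarrow> prec a c) \<and>
     (\<forall>a \<in> E. \<forall>b \<in> E. a \<noteq> b \<longrightarrow> prec a b \<or> prec b a) \<and>
     (\<forall>e1 \<in> E. \<forall>e2 \<in> E. reach E src tgt e1 e2 \<longrightarrow> prec e1 e2) \<and>
     (\<forall>e1 \<in> E. \<forall>e2 \<in> E. \<forall>e3 \<in> E. prec e1 e2 \<longrightarrow> prec e2 e3 \<longrightarrow> reach E src tgt e1 e3 \<longrightarrow>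
        reach E src tgt e1 e2 \<or> reach E src tgt e2 e3)"

definition pop_graph :: "'v set \<Rightarrow> 'e set \<Rightarrow> ('e \<Rightarrow> 'v) \<Rightarrow> ('e \<Rightarrow> 'v) \<Rightarrow> ('e \<Rightarrow> 'e \<Rightarrow> bool) \<Rightarrow> bool" where
  "pop_graph V E src tgt prec \<longleftrightarrow> progressive_graph V E src tgt \<and> planar_order E src tgt prec"

definition i_plus :: "'e set \<Rightarrow> ('e \<Rightarrow> 'v) \<Rightarrow> ('e \<Rightarrow> 'v) \<Rightarrow> ('e \<Rightarrow> 'e \<Rightarrow> bool) \<Rightarrow> 'e \<Rightarrow> 'e" where
  "i_plus E src tgt prec e =
     (THE i. i \<in> input_edges E src tgt \<and> reach E src tgt i e \<and>
        (\<forall>j \<in> input_edges E src tgt. reach E src tgt j e \<longrightarrow> j = i \<or> prec j i))"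

definition o_minus :: "'e set \<Rightarrow> ('e \<Rightarrow> 'v) \<Rightarrow> ('e \<Rightarrow> 'v) \<Rightarrow> ('e \<Rightarrow> 'e \<Rightarrow> bool) \<Rightarrow> 'e \<Rightarrow> 'e" where
  "o_minus E src tgt prec e =
     (THE o'. o' \<in> output_edges E src tgt \<and> reach E src tgt e o' \<and>
        (\<forall>p \<in> output_edges E src tgt. reach E src tgt e p \<longrightarrow> p = o' \<or> prec o' p))"

text \<open>Intervals P_k (inputs i_1 < ... < i_m given by ins) and Q_k (outputs given by outs).\<close>
definition P_int :: "'e set \<Rightarrow> ('e \<Rightarrow> 'e \<Rightarrow> bool) \<Rightarrow> (nat \<Rightarrow> 'e) \<Rightarrow> nat \<Rightarrow> nat \<Rightarrow> 'e set" where
  "P_int E prec ins m k =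
     (if k < m then {e \<in> E. prec (ins k) e \<and> prec e (ins (k + 1))}
      else {e \<in> E. prec (ins m) e})"

definition Q_int :: "'e set \<Rightarrow> ('e \<Rightarrow> 'e \<Rightarrow> bool) \<Rightarrow> (nat \<Rightarrow> 'e) \<Rightarrow> nat \<Rightarrow> 'e set" where
  "Q_int E prec outs k =
     (if k = 1 then {e \<in> E. prec e (outs 1)}
      else {e \<in> E. prec (outs (k - 1)) e \<and> prec e (outs k)})"

end

theory Submission
  imports Defs
begin


lemma es_fin: "finite E \<Longrightarrow> finite (edge_succ E src tgt)"
  by (rule finite_subset[of _ "E \<times> E"]) (auto simp: edge_succ_def)

lemma es_acyc: "progressive_graph V E src tgt \<Longrightarrow> acyclic (edge_succ E src tgt)"
  unfolding acyclic_def progressive_graph_def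
  by (metis (no_types, lifting) case_prodD edge_succ_def mem_Collect_eq tranclE)

lemma card_pos: "finite E \<Longrightarrow> x \<in> E \<Longrightarrow> P x \<Longrightarrow> card {e \<in> E. P e} \<ge> 1"
proof -
  assume "finite E" "x \<in> E" "P x"
  hence "finite {e \<in> E. P e}" "{e \<in> E. P e} \<noteq> {}" by auto
  thus ?thesis by (simp add: Suc_le_eq card_gt_0_iff)
qed

lemma not_reach_input:
  assumes "progressive_graph V E src tgt" "i \<in> input_edges E src tgt"
  shows "\<not> reach E src tgt a i"
proof
  assume "reach E src tgt a i"
  then obtain c where "(c, i) \<in> edge_succ E src tgt" unfolding reach_def by (meson tranclE)
  hence c: "c \<in> E" "tgt c = src i" by (auto simp: edge_succ_def)
  have fin: "finite E" using assms(1) by (simp add: progressive_graph_def)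
  have "indeg E tgt (src i) \<ge> 1" unfolding indeg_def using card_pos[OF fin c(1), of "\<lambda>e. tgt e = src i"] c by simp
  moreover have "outdeg E src (src i) \<ge> 1" unfolding outdeg_def using card_pos[OF fin, of i "\<lambda>e. src e = src i"] assms(2)
    by (simp add: input_edges_def)
  ultimately show False using assms(2) by (simp add: input_edges_def degree_def)
qed

lemma not_reach_output:
  assumes "progressive_graph V E src tgt" "o' \<in> output_edges E src tgt"
  shows "\<not> reach E src tgt o' a"
proof
  assume "reach E src tgt o' a"
  then obtain c where "(o', c) \<in> edge_succ E src tgt" unfolding reach_def by (meson tranclD)
  hence c: "c \<in> E" "src c = tgt o'" by (auto simp: edge_succ_def)
  have fin: "finite E" using assms(1) by (simp add: progressive_graph_def)
  have "outdeg E src (tgt o') \<ge> 1" unfolding outdeg_def using card_pos[OF fin c(1), of "\<lambda>e. src e = tgt o'"] c by simp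
  moreover have "indeg E tgt (tgt o') \<ge> 1" unfolding indeg_def using card_pos[OF fin, of o' "\<lambda>e. tgt e = tgt o'"] assms(2)
    by (simp add: output_edges_def)
  ultimately show False using assms(2) by (simp add: output_edges_def degree_def)
qed

lemma exists_input:
  assumes pg: "progressive_graph V E src tgt"
  shows "\<forall>e. e \<in> E \<longrightarrow> e \<notin> input_edges E src tgt \<longrightarrow> (\<exists>i \<in> input_edges E src tgt. reach E src tgt i e)"
proof (rule allI)
  fix e0
  have wf: "wf (edge_succ E src tgt)" using finite_acyclic_wf[OF es_fin es_acyc[OF pg]] pg by (simp add: progressive_graph_def)
  show "e0 \<in> E \<longrightarrow> e0 \<notin> input_edges E src tgt \<longrightarrow> (\<exists>i \<in> input_edges E src tgt. reach E src tgt i e0)"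
  proof (rule wf_induct[OF wf, of "\<lambda>e. e \<in> E \<longrightarrow> e \<notin> input_edges E src tgt \<longrightarrow> (\<exists>i \<in> input_edges E src tgt. reach E src tgt i e)"], intro impI)
  fix e assume IH: "\<forall>y. (y, e) \<in> edge_succ E src tgt \<longrightarrow> y \<in> E \<longrightarrow> y \<notin> input_edges E src tgt \<longrightarrow> (\<exists>i \<in> input_edges E src tgt. reach E src tgt i y)"
  assume less2: "e \<in> E" and less3: "e \<notin> input_edges E src tgt"
  have fin: "finite E" using pg by (simp add: progressive_graph_def)
  have "outdeg E src (src e) \<ge> 1" unfolding outdeg_def using card_pos[OF fin less2, of "\<lambda>x. src x = src e"] by simp
  moreover have "src e \<in> V" using pg less2 by (auto simp: progressive_graph_def)
  ultimately have "indeg E tgt (src e) \<noteq> 0" using pg less3 by (auto simp: progressive_graph_def input_edges_def less2)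
  hence "{x \<in> E. tgt x = src e} \<noteq> {}" unfolding indeg_def by (metis card.empty)
  then obtain f where f: "f \<in> E" "tgt f = src e" by auto
  hence fe: "(f, e) \<in> edge_succ E src tgt" using less2 by (simp add: edge_succ_def)
  have ac: "acyclic (edge_succ E src tgt)" using es_acyc[OF pg] .
  have fne: "f \<noteq> e" using fe ac by (auto simp: acyclic_def)
  show "\<exists>i \<in> input_edges E src tgt. reach E src tgt i e"
  proof (cases "f \<in> input_edges E src tgt")
    case True thus ?thesis using fe fne by (auto simp: reach_def)
  next
    case False
    then obtain i where i: "i \<in> input_edges E src tgt" "reach E src tgt i f" using IH fe f(1) False by blast
    hence "(i, e) \<in> (edge_succ E src tgt)\<^sup>+" using fe by (auto simp: reach_def)
    moreover have "i \<noteq> e"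
    proof
      assume "i = e"
      hence "(e, e) \<in> (edge_succ E src tgt)\<^sup>+" using i fe by (auto simp: reach_def)
      thus False using ac by (auto simp: acyclic_def)
    qed
    ultimately show ?thesis using i by (auto simp: reach_def)
  qed
qed
qed

lemma exists_output:
  assumes pg: "progressive_graph V E src tgt"
  shows "\<forall>e. e \<in> E \<longrightarrow> e \<notin> output_edges E src tgt \<longrightarrow> (\<exists>o' \<in> output_edges E src tgt. reach E src tgt e o')"
proof (rule allI)
  fix e0
  have wf: "wf ((edge_succ E src tgt)\<inverse>)" using finite_acyclic_wf_converse[OF es_fin es_acyc[OF pg]] pg by (simp add: progressive_graph_def)
  show "e0 \<in> E \<longrightarrow> e0 \<notin> output_edges E src tgt \<longrightarrow> (\<exists>o' \<in> output_edges E src tgt. reach E src tgt e0 o')"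
  proof (rule wf_induct[OF wf, of "\<lambda>e. e \<in> E \<longrightarrow> e \<notin> output_edges E src tgt \<longrightarrow> (\<exists>o' \<in> output_edges E src tgt. reach E src tgt e o')"], intro impI)
  fix e assume IH: "\<forall>y. (y, e) \<in> (edge_succ E src tgt)\<inverse> \<longrightarrow> y \<in> E \<longrightarrow> y \<notin> output_edges E src tgt \<longrightarrow> (\<exists>o' \<in> output_edges E src tgt. reach E src tgt y o')"
  assume less2: "e \<in> E" and less3: "e \<notin> output_edges E src tgt"
  have fin: "finite E" using pg by (simp add: progressive_graph_def)
  have "indeg E tgt (tgt e) \<ge> 1" unfolding indeg_def using card_pos[OF fin less2, of "\<lambda>x. tgt x = tgt e"] by simp
  moreover have "tgt e \<in> V" using pg less2 by (auto simp: progressive_graph_def)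
  ultimately have "outdeg E src (tgt e) \<noteq> 0" using pg less3 by (auto simp: progressive_graph_def output_edges_def less2)
  hence "{x \<in> E. src x = tgt e} \<noteq> {}" unfolding outdeg_def by (metis card.empty)
  then obtain f where f: "f \<in> E" "src f = tgt e" by auto
  hence fe: "(e, f) \<in> edge_succ E src tgt" using less2 by (simp add: edge_succ_def)
  have ac: "acyclic (edge_succ E src tgt)" using es_acyc[OF pg] .
  have fne: "f \<noteq> e" using fe ac by (auto simp: acyclic_def)
  show "\<exists>o' \<in> output_edges E src tgt. reach E src tgt e o'"
  proof (cases "f \<in> output_edges E src tgt")
    case True thus ?thesis using fe fne by (auto simp: reach_def)
  next
    case False
    then obtain i where i: "i \<in> output_edges E src tgt" "reach E src tgt f i" using IH fe f(1) False by blast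
    hence "(e, i) \<in> (edge_succ E src tgt)\<^sup>+" using fe by (auto simp: reach_def)
    moreover have "i \<noteq> e"
    proof
      assume "i = e"
      hence "(e, e) \<in> (edge_succ E src tgt)\<^sup>+" using i fe by (auto simp: reach_def)
      thus False using ac by (auto simp: acyclic_def)
    qed
    ultimately show ?thesis using i by (auto simp: reach_def)
  qed
qed
qed

lemma part1:
  assumes pop: "pop_graph V E src tgt prec"
    and ins_bij: "bij_betw ins {1..m} (input_edges E src tgt)"
    and ins_mono: "\<And>j k. 1 \<le> j \<Longrightarrow> j < k \<Longrightarrow> k \<le> m \<Longrightarrow> prec (ins j) (ins k)"
    and eE: "e \<in> E" and eI: "e \<notin> input_edges E src tgt" and k1: "1 \<le> k" and km: "k \<le> m"
  shows "e \<in> P_int E prec ins m k \<longleftrightarrow> i_plus E src tgt prec e = ins k"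
proof -
  let ?I = "input_edges E src tgt"
  let ?r = "reach E src tgt"
  have pg: "progressive_graph V E src tgt" and po: "planar_order E src tgt prec" using pop by (auto simp: pop_graph_def)
  have irr: "\<And>a. \<not> prec a a" using po unfolding planar_order_def by blast
  have trans: "\<And>a b c. prec a b \<Longrightarrow> prec b c \<Longrightarrow> prec a c" using po unfolding planar_order_def by blast
  have tot: "\<And>a b. a \<in> E \<Longrightarrow> b \<in> E \<Longrightarrow> a \<noteq> b \<Longrightarrow> prec a b \<or> prec b a" using po unfolding planar_order_def by blast
  have P1: "\<And>a b. a \<in> E \<Longrightarrow> b \<in> E \<Longrightarrow> ?r a b \<Longrightarrow> prec a b" using po unfolding planar_order_def by blast
  have P2: "\<And>a b c. a \<in> E \<Longrightarrow> b \<in> E \<Longrightarrow> c \<in> E \<Longrightarrow> prec a b \<Longrightarrow> prec b c \<Longrightarrow> ?r a c \<Longrightarrow> ?r a b \<or> ?r b c"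
    using po unfolding planar_order_def by blast
  have insI: "\<And>k. 1 \<le> k \<Longrightarrow> k \<le> m \<Longrightarrow> ins k \<in> ?I" using ins_bij by (auto simp: bij_betw_def)
  have insE: "\<And>k. 1 \<le> k \<Longrightarrow> k \<le> m \<Longrightarrow> ins k \<in> E" using insI by (auto simp: input_edges_def)
  have le_prec: "\<And>a b. 1 \<le> a \<Longrightarrow> a \<le> b \<Longrightarrow> b \<le> m \<Longrightarrow> a = b \<or> prec (ins a) (ins b)"
    using ins_mono by (metis le_neq_implies_less)
  obtain i where i: "i \<in> ?I" "?r i e" using exists_input[OF pg] eE eI by blast
  obtain k0 where k0: "k0 \<in> {1..m}" "ins k0 = i" using ins_bij i(1) by (metis bij_betw_def imageE)
  define K where "K = {k \<in> {1..m}. ?r (ins k) e}"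
  have finK: "finite K" unfolding K_def by simp
  have k0K: "k0 \<in> K" using k0 i unfolding K_def by simp
  define j where "j = Max K"
  have jK: "j \<in> K" unfolding j_def using finK k0K Max_in by blast
  have j1: "1 \<le> j" "j \<le> m" and rj: "?r (ins j) e" using jK unfolding K_def by auto
  have jmax: "\<And>k. k \<in> K \<Longrightarrow> k \<le> j" unfolding j_def using finK by simp
  have ip: "i_plus E src tgt prec e = ins j"
    unfolding i_plus_def
  proof (rule the_equality)
    show "ins j \<in> ?I \<and> ?r (ins j) e \<and> (\<forall>x \<in> ?I. ?r x e \<longrightarrow> x = ins j \<or> prec x (ins j))"
    proof (intro conjI ballI impI)
      show "ins j \<in> ?I" using insI j1 by simp
      show "?r (ins j) e" by (rule rj)
      fix x assume "x \<in> ?I" "?r x e"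
      then obtain k where k: "k \<in> {1..m}" "ins k = x" using ins_bij by (metis bij_betw_def imageE)
      hence "k \<in> K" using \<open>?r x e\<close> unfolding K_def by simp
      hence "k \<le> j" by (rule jmax)
      thus "x = ins j \<or> prec x (ins j)" using le_prec[of k j] k j1 by auto
    qed
  next
    fix y assume y: "y \<in> ?I \<and> ?r y e \<and> (\<forall>x \<in> ?I. ?r x e \<longrightarrow> x = y \<or> prec x y)"
    have "ins j = y \<or> prec (ins j) y" using y insI j1 rj by blast
    moreover have "y = ins j \<or> prec y (ins j)"
    proof -
      obtain k where k: "k \<in> {1..m}" "ins k = y" using ins_bij y by (metis bij_betw_def imageE)
      hence "k \<in> K" using y unfolding K_def by simp
      hence "k \<le> j" by (rule jmax)
      thus ?thesis using le_prec[of k j] k j1 by auto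
    qed
    ultimately show "y = ins j" using trans irr by blast
  qed
  have ej: "e \<noteq> ins a" if "1 \<le> a" "a \<le> m" for a using eI insI that by auto
  have inPj: "e \<in> P_int E prec ins m j"
  proof -
    have a: "prec (ins j) e" using P1 insE j1 eE rj by blast
    have b: "prec e (ins (j+1))" if "j < m"
    proof (rule ccontr)
      assume "\<not> prec e (ins (j+1))"
      hence c: "prec (ins (j+1)) e" using tot[of e "ins (j+1)"] eE insE that ej[of "j+1"] by auto
      have "prec (ins j) (ins (j+1))" using ins_mono j1 that by simp
      hence "?r (ins j) (ins (j+1)) \<or> ?r (ins (j+1)) e" using P2 c rj insE j1 that eE by simp
      moreover have "\<not> ?r (ins j) (ins (j+1))" using not_reach_input[OF pg] insI that by simp
      moreover have "\<not> ?r (ins (j+1)) e" using jmax[of "j+1"] that unfolding K_def by auto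
      ultimately show False by blast
    qed
    show ?thesis using a b eE j1 unfolding P_int_def by (auto dest: le_antisym)
  qed
  have uniq: "k = j" if "e \<in> P_int E prec ins m k"
  proof (rule ccontr)
    assume "k \<noteq> j"
    hence "k < j \<or> j < k" by arith
    thus False
    proof
      assume kj: "k < j"
      hence "prec e (ins (k+1))" using that j1 unfolding P_int_def by auto
      moreover have "k+1 = j \<or> prec (ins (k+1)) (ins j)" using le_prec[of "k+1" j] kj j1 by simp
      moreover have "prec (ins j) e" using inPj j1 unfolding P_int_def by (auto split: if_splits)
      ultimately show False using trans[of e "ins (k+1)" "ins j"] trans[of e "ins j" e] irr by metis
    next
      assume jk: "j < k"
      hence "prec e (ins (j+1))" using inPj km unfolding P_int_def by auto
      moreover have "j+1 = k \<or> prec (ins (j+1)) (ins k)" using le_prec[of "j+1" k] jk km by simp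
      moreover have "prec (ins k) e"
      proof (cases "k < m")
        case True thus ?thesis using that unfolding P_int_def by simp
      next
        case False hence "k = m" using km by simp
        thus ?thesis using that False unfolding P_int_def by simp
      qed
      ultimately show False using trans[of e "ins (j+1)" "ins k"] trans[of e "ins k" e] irr by metis
    qed
  qed
  have inj: "ins j = ins k \<longleftrightarrow> j = k" using ins_bij j1 k1 km unfolding bij_betw_def inj_on_def by (metis atLeastAtMost_iff)
  have "e \<in> P_int E prec ins m k \<longleftrightarrow> j = k" using inPj uniq by blast
  thus ?thesis using ip inj by simp
qed

lemma part2:
  assumes pop: "pop_graph V E src tgt prec"
    and outs_bij: "bij_betw outs {1..n} (output_edges E src tgt)"
    and outs_mono: "\<And>j k. 1 \<le> j \<Longrightarrow> j < k \<Longrightarrow> k \<le> n \<Longrightarrow> prec (outs j) (outs k)"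
    and eE: "e \<in> E" and eO: "e \<notin> output_edges E src tgt" and k1: "1 \<le> k" and kn: "k \<le> n"
  shows "e \<in> Q_int E prec outs k \<longleftrightarrow> o_minus E src tgt prec e = outs k"
proof -
  let ?O = "output_edges E src tgt"
  let ?r = "reach E src tgt"
  have pg: "progressive_graph V E src tgt" and po: "planar_order E src tgt prec" using pop by (auto simp: pop_graph_def)
  have irr: "\<And>a. \<not> prec a a" using po unfolding planar_order_def by blast
  have trans: "\<And>a b c. prec a b \<Longrightarrow> prec b c \<Longrightarrow> prec a c" using po unfolding planar_order_def by blast
  have tot: "\<And>a b. a \<in> E \<Longrightarrow> b \<in> E \<Longrightarrow> a \<noteq> b \<Longrightarrow> prec a b \<or> prec b a" using po unfolding planar_order_def by blast
  have P1: "\<And>a b. a \<in> E \<Longrightarrow> b \<in> E \<Longrightarrow> ?r a b \<Longrightarrow> prec a b" using po unfolding planar_order_def by blast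
  have P2: "\<And>a b c. a \<in> E \<Longrightarrow> b \<in> E \<Longrightarrow> c \<in> E \<Longrightarrow> prec a b \<Longrightarrow> prec b c \<Longrightarrow> ?r a c \<Longrightarrow> ?r a b \<or> ?r b c"
    using po unfolding planar_order_def by blast
  have outsO: "\<And>k. 1 \<le> k \<Longrightarrow> k \<le> n \<Longrightarrow> outs k \<in> ?O" using outs_bij by (auto simp: bij_betw_def)
  have outsE: "\<And>k. 1 \<le> k \<Longrightarrow> k \<le> n \<Longrightarrow> outs k \<in> E" using outsO by (auto simp: output_edges_def)
  have le_prec: "\<And>a b. 1 \<le> a \<Longrightarrow> a \<le> b \<Longrightarrow> b \<le> n \<Longrightarrow> a = b \<or> prec (outs a) (outs b)"
    using outs_mono by (metis le_neq_implies_less)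
  obtain i where i: "i \<in> ?O" "?r e i" using exists_output[OF pg] eE eO by blast
  obtain k0 where k0: "k0 \<in> {1..n}" "outs k0 = i" using outs_bij i(1) by (metis bij_betw_def imageE)
  define K where "K = {k \<in> {1..n}. ?r e (outs k)}"
  have finK: "finite K" unfolding K_def by simp
  have k0K: "k0 \<in> K" using k0 i unfolding K_def by simp
  define j where "j = Min K"
  have jK: "j \<in> K" unfolding j_def using finK k0K Min_in by blast
  have j1: "1 \<le> j" "j \<le> n" and rj: "?r e (outs j)" using jK unfolding K_def by auto
  have jmin: "\<And>k. k \<in> K \<Longrightarrow> j \<le> k" unfolding j_def using finK by simp
  have ip: "o_minus E src tgt prec e = outs j"
    unfolding o_minus_def
  proof (rule the_equality)
    show "outs j \<in> ?O \<and> ?r e (outs j) \<and> (\<forall>x \<in> ?O. ?r e x \<longrightarrow> x = outs j \<or> prec (outs j) x)"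
    proof (intro conjI ballI impI)
      show "outs j \<in> ?O" using outsO j1 by simp
      show "?r e (outs j)" by (rule rj)
      fix x assume "x \<in> ?O" "?r e x"
      then obtain k where k: "k \<in> {1..n}" "outs k = x" using outs_bij by (metis bij_betw_def imageE)
      hence "k \<in> K" using \<open>?r e x\<close> unfolding K_def by simp
      hence "j \<le> k" by (rule jmin)
      thus "x = outs j \<or> prec (outs j) x" using le_prec[of j k] k j1 by auto
    qed
  next
    fix y assume y: "y \<in> ?O \<and> ?r e y \<and> (\<forall>x \<in> ?O. ?r e x \<longrightarrow> x = y \<or> prec y x)"
    have "outs j = y \<or> prec y (outs j)" using y outsO j1 rj by blast
    moreover have "y = outs j \<or> prec (outs j) y"
    proof -
      obtain k where k: "k \<in> {1..n}" "outs k = y" using outs_bij y by (metis bij_betw_def imageE)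
      hence "k \<in> K" using y unfolding K_def by simp
      hence "j \<le> k" by (rule jmin)
      thus ?thesis using le_prec[of j k] k j1 by auto
    qed
    ultimately show "y = outs j" using trans[of y "outs j" y] irr by metis
  qed
  have ej: "e \<noteq> outs a" if "1 \<le> a" "a \<le> n" for a using eO outsO that by auto
  have a: "prec e (outs j)" using P1 outsE j1 eE rj by blast
  have b: "prec (outs (j-1)) e" if "j \<noteq> 1"
  proof (rule ccontr)
    assume "\<not> prec (outs (j-1)) e"
    hence c: "prec e (outs (j-1))" using tot[of e "outs (j-1)"] eE outsE that ej[of "j-1"] j1 by auto
    have "prec (outs (j-1)) (outs j)" using outs_mono j1 that by simp
    hence "?r e (outs (j-1)) \<or> ?r (outs (j-1)) (outs j)" using P2[of e "outs (j-1)" "outs j"] c rj outsE j1 that eE by simp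
    moreover have "\<not> ?r (outs (j-1)) (outs j)" using not_reach_output[OF pg] outsO that j1 by simp
    moreover have "\<not> ?r e (outs (j-1))" using jmin[of "j-1"] that j1 unfolding K_def by force
    ultimately show False by blast
  qed
  have inQj: "e \<in> Q_int E prec outs j" using a b eE unfolding Q_int_def by auto
  have uniq: "k = j" if kQ: "e \<in> Q_int E prec outs k"
  proof (rule ccontr)
    assume "k \<noteq> j"
    hence "k < j \<or> j < k" by arith
    thus False
    proof
      assume kj: "k < j"
      hence "j \<noteq> 1" using k1 by simp
      hence "prec (outs (j-1)) e" by (rule b)
      moreover have "prec e (outs k)" using kQ unfolding Q_int_def by (cases "k = 1") simp_all
      moreover have "k = j-1 \<or> prec (outs k) (outs (j-1))" using le_prec[of k "j-1"] kj k1 j1 by simp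
      ultimately show False using trans[of e "outs k" "outs (j-1)"] trans[of e "outs (j-1)" e] irr by metis
    next
      assume jk: "j < k"
      hence "k \<noteq> 1" using j1 by simp
      hence "prec (outs (k-1)) e" using kQ unfolding Q_int_def by simp
      moreover have "j = k-1 \<or> prec (outs j) (outs (k-1))" using le_prec[of j "k-1"] jk j1 kn by simp
      ultimately show False using a trans[of e "outs j" "outs (k-1)"] trans[of e "outs (k-1)" e] irr by metis
    qed
  qed
  have inj: "outs j = outs k \<longleftrightarrow> j = k" using outs_bij j1 k1 kn unfolding bij_betw_def inj_on_def by (metis atLeastAtMost_iff)
  have "e \<in> Q_int E prec outs k \<longleftrightarrow> j = k" using inQj uniq by blast
  thus ?thesis using ip inj by simp
qed


theorem lemma3p3:
  fixes V :: "'v set" and E :: "'e set" and src tgt :: "'e \<Rightarrow> 'v"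
    and prec :: "'e \<Rightarrow> 'e \<Rightarrow> bool"
    and ins outs :: "nat \<Rightarrow> 'e" and m n :: nat
  assumes pop: "pop_graph V E src tgt prec"
    and ins_bij: "bij_betw ins {1..m} (input_edges E src tgt)"
    and ins_mono: "\<And>j k. 1 \<le> j \<Longrightarrow> j < k \<Longrightarrow> k \<le> m \<Longrightarrow> prec (ins j) (ins k)"
    and outs_bij: "bij_betw outs {1..n} (output_edges E src tgt)"
    and outs_mono: "\<And>j k. 1 \<le> j \<Longrightarrow> j < k \<Longrightarrow> k \<le> n \<Longrightarrow> prec (outs j) (outs k)"
  shows "(\<forall>e \<in> E - input_edges E src tgt. \<forall>k. 1 \<le> k \<and> k \<le> m \<longrightarrow>
            (e \<in> P_int E prec ins m k \<longleftrightarrow> i_plus E src tgt prec e = ins k))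
       \<and> (\<forall>e \<in> E - output_edges E src tgt. \<forall>k. 1 \<le> k \<and> k \<le> n \<longrightarrow>
            (e \<in> Q_int E prec outs k \<longleftrightarrow> o_minus E src tgt prec e = outs k))"
proof (intro conjI ballI allI impI)
  fix e k assume "e \<in> E - input_edges E src tgt" "1 \<le> k \<and> k \<le> m"
  thus "e \<in> P_int E prec ins m k \<longleftrightarrow> i_plus E src tgt prec e = ins k"
    using part1[OF pop ins_bij ins_mono] by blast
next
  fix e k assume "e \<in> E - output_edges E src tgt" "1 \<le> k \<and> k \<le> n"
  thus "e \<in> Q_int E prec outs k \<longleftrightarrow> o_minus E src tgt prec e = outs k"
    using part2[OF pop outs_bij outs_mono] by blast
qed

end
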